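(* Fix an integer $d\geqslant 3$. Then there is a constant $C>0$ (depending only on $d$) such that $P(n,d)\leqslant C\,n^{2d-3}$ for all sufficiently large $n$; i.e., $P(n,d)=O(n^{2d-3})$ as $n\to\infty$.
   Context: Let $S_n$ be the symmetric group on $[n]$, permutations written as $\pi=(\pi(1),\dots,\pi(n))$. The characteristic set of $\pi$ is $A(\pi)=\{(\pi(i),\pi(i+1)):1\leqslant i<n\}$, and the block permutation distance is $d_B(\pi_1,\pi_2)=|A(\pi_1)\setminus A(\pi_2)|$ (equivalently, $d_B(\pi_1,\pi_2)+1$ is the minimum number of consecutive segments into which $\pi_1$ must be cut so that $\pi_2$ is obtained by rearranging these segments). The $(n,d)$-block permutation graph $\mathcal{G}_{n,d}$ has vertex set $S_n$, with distinct $\pi,\sigma$ adjacent iff $d_B(\pi,\sigma)<d$. Let $\mathcal{H}_{n,d}$ be the subgraph of $\mathcal{G}_{n,d}$ induced by the neighborhood of the identity permutation $(1,2,\dots,n)$ (i.e. by all $\sigma$ with $1\leqslant d_B(\sigma,\mathrm{id})\leqslant d-1$), and let $P(n,d)$ denote the number of edges of $\mathcal{H}_{n,d}$. *)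

theory Defs
  imports Complex_Main
begin

text \<open>Permutations of [n] = {1..n}, written in one-line notation as lists
  (pi(1),...,pi(n)).\<close>
definition perms :: "nat \<Rightarrow> nat list set" where
  "perms n = {p. distinct p \<and> set p = {1..n}}"

definition char_set :: "nat list \<Rightarrow> (nat \<times> nat) set" where
  "char_set p = {(p ! i, p ! (Suc i)) | i. Suc i < length p}"

definition dB :: "nat list \<Rightarrow> nat list \<Rightarrow> nat" where
  "dB p q = card (char_set p - char_set q)"

definition id_perm :: "nat \<Rightarrow> nat list" where
  "id_perm n = [1..<Suc n]"

text \<open>Vertex set of H_{n,d}: neighbourhood of the identity in G_{n,d}.\<close>
definition H_vertices :: "nat \<Rightarrow> nat \<Rightarrow> nat list set" where
  "H_vertices n d = {s \<in> perms n. 1 \<le> dB s (id_perm n) \<and> dB s (id_perm n) < d}"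

definition H_edges :: "nat \<Rightarrow> nat \<Rightarrow> nat list set set" where
  "H_edges n d = {{p, q} | p q. p \<in> H_vertices n d \<and> q \<in> H_vertices n d \<and> p \<noteq> q \<and> dB p q < d}"

definition P :: "nat \<Rightarrow> nat \<Rightarrow> nat" where
  "P n d = card (H_edges n d)"

end

theory Submission imports Defs begin

definition cutset :: "nat \<Rightarrow> nat list \<Rightarrow> nat set" where
  "cutset n p = {i \<in> {1..<n}. (i, Suc i) \<notin> char_set p}"

definition nonid :: "nat \<Rightarrow> nat list \<Rightarrow> (nat \<times> nat) set" where
  "nonid n p = char_set p - char_set (id_perm n)"

lemma mem_char_set: "(a,b) \<in> char_set p \<longleftrightarrow> (\<exists>i. Suc i < length p \<and> p!i = a \<and> p!Suc i = b)"
  unfolding char_set_def by auto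

lemma char_set_eq: "char_set p = (\<lambda>i. (p!i, p!Suc i)) ` {..<length p - 1}"
  unfolding char_set_def by auto

lemma finite_char_set[simp]: "finite (char_set p)"
  unfolding char_set_eq by simp

lemma card_char_set: assumes "distinct p" shows "card (char_set p) = length p - 1"
proof -
  have "inj_on (\<lambda>i. (p!i, p!Suc i)) {..<length p - 1}"
    using assms by (auto simp: inj_on_def nth_eq_iff_index_eq)
  then show ?thesis unfolding char_set_eq by (simp add: card_image)
qed

lemma char_set_id: "char_set (id_perm n) = {(i, Suc i) | i. 1 \<le> i \<and> i < n}"
proof -
  have l: "length (id_perm n) = n" by (simp add: id_perm_def)
  have nt: "\<And>i. i < n \<Longrightarrow> id_perm n ! i = Suc i" by (simp add: id_perm_def del: upt_Suc)
  have "char_set (id_perm n) = (\<lambda>i. (Suc i, Suc (Suc i))) ` {..<n - 1}"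
    unfolding char_set_eq l by (rule image_cong) (auto simp: nt)
  also have "\<dots> = {(i, Suc i) | i. 1 \<le> i \<and> i < n}"
  proof (rule set_eqI, rule iffI)
    fix x assume "x \<in> (\<lambda>i. (Suc i, Suc (Suc i))) ` {..<n - 1}"
    then show "x \<in> {(i, Suc i) | i. 1 \<le> i \<and> i < n}" by auto
  next
    fix x assume "x \<in> {(i, Suc i) | i. 1 \<le> i \<and> i < n}"
    then obtain i where i: "x = (i, Suc i)" "1 \<le> i" "i < n" by blast
    show "x \<in> (\<lambda>i. (Suc i, Suc (Suc i))) ` {..<n - 1}"
      by (rule image_eqI[where x="i - 1"]) (use i in auto)
  qed
  finally show ?thesis .
qed

lemma perms_len: "p \<in> perms n \<Longrightarrow> length p = n"
proof -
  assume "p \<in> perms n"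
  then have "distinct p" "set p = {1..n}" unfolding perms_def by auto
  then show ?thesis using distinct_card[of p] by simp
qed

lemma perms_distinct: "p \<in> perms n \<Longrightarrow> distinct p"
  unfolding perms_def by auto

lemma perms_set: "p \<in> perms n \<Longrightarrow> set p = {1..n}"
  unfolding perms_def by auto

lemma succ_unique: "distinct p \<Longrightarrow> (a,b) \<in> char_set p \<Longrightarrow> (a,c) \<in> char_set p \<Longrightarrow> b = c"
  unfolding mem_char_set by (metis Suc_lessD nth_eq_iff_index_eq)

lemma pred_unique: "distinct p \<Longrightarrow> (a,b) \<in> char_set p \<Longrightarrow> (c,b) \<in> char_set p \<Longrightarrow> a = c"
  unfolding mem_char_set by (metis Suc_lessD nth_eq_iff_index_eq Suc_inject)

lemma char_set_in: "(a,b) \<in> char_set p \<Longrightarrow> a \<in> set p \<and> b \<in> set p"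
  unfolding mem_char_set by auto

lemma card_cutset: assumes "p \<in> perms n" shows "card (cutset n p) = dB p (id_perm n)"
proof -
  have d: "distinct p" "length p = n" using assms perms_distinct perms_len by auto
  have did: "distinct (id_perm n)" "length (id_perm n) = n" by (auto simp: id_perm_def)
  have "card (char_set p - char_set (id_perm n)) = card (char_set p) - card (char_set p \<inter> char_set (id_perm n))"
    by (rule card_Diff_subset_Int) simp
  also have "\<dots> = card (char_set (id_perm n)) - card (char_set (id_perm n) \<inter> char_set p)"
    using card_char_set[OF d(1)] card_char_set[OF did(1)] d did by (simp add: Int_commute)
  also have "\<dots> = card (char_set (id_perm n) - char_set p)"
    by (rule card_Diff_subset_Int[symmetric]) simp
  also have "char_set (id_perm n) - char_set p = (\<lambda>i. (i, Suc i)) ` cutset n p"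
    unfolding char_set_id cutset_def by auto
  also have "card \<dots> = card (cutset n p)" by (rule card_image) (auto simp: inj_on_def)
  finally show ?thesis unfolding dB_def by simp
qed

lemma uniq: assumes "p \<in> perms n" "q \<in> perms n" "p!0 = q!0" "char_set p = char_set q"
  shows "p = q"
proof -
  have d: "distinct p" "length p = n" "distinct q" "length q = n"
    using assms perms_distinct perms_len by auto
  have "\<forall>i. i < n \<longrightarrow> p!i = q!i"
  proof
    fix i show "i < n \<longrightarrow> p!i = q!i"
    proof (induction i)
      case 0 then show ?case using assms by simp
    next
      case (Suc i)
      show ?case
      proof
        assume "Suc i < n"
        then have "(p!i, p!Suc i) \<in> char_set p" using d unfolding mem_char_set by auto
        then have "(p!i, p!Suc i) \<in> char_set q" using assms(4) by simp
        moreover have "(q!i, q!Suc i) \<in> char_set q" using \<open>Suc i < n\<close> d unfolding mem_char_set by metis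
        ultimately show "p!Suc i = q!Suc i" using Suc \<open>Suc i < n\<close> succ_unique[OF d(3)] by auto
      qed
    qed
  qed
  then show ?thesis using d by (simp add: nth_equalityI)
qed

lemma char_set_decomp: assumes "p \<in> perms n"
  shows "char_set p = nonid n p \<union> {(i, Suc i) | i. i \<in> {1..<n} \<and> i \<notin> cutset n p}"
  unfolding nonid_def cutset_def char_set_id by auto

lemma W_contain:
  assumes "p \<in> perms n" "cutset n p \<subseteq> T" "n \<ge> 1"
  defines "W \<equiv> insert 1 (insert n (T \<union> Suc ` T))"
  shows "p!0 \<in> W" "nonid n p \<subseteq> W \<times> W"
proof -
  have d: "distinct p" "length p = n" "set p = {1..n}" using assms perms_distinct perms_len perms_set by auto
  have "p!0 \<in> set p" using d assms(3) by (intro nth_mem) simp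
  then have x: "p!0 \<in> {1..n}" using d by simp
  show "p!0 \<in> W"
  proof (cases "p!0 = 1")
    case False
    have "(p!0 - 1, p!0) \<notin> char_set p"
    proof
      assume "(p!0 - 1, p!0) \<in> char_set p"
      then obtain i where "Suc i < n" "p!Suc i = p!0" unfolding mem_char_set d(2) by blast
      then show False using d by (simp add: nth_eq_iff_index_eq)
    qed
    then have "p!0 - 1 \<in> cutset n p" using False x unfolding cutset_def by auto
    then have "Suc (p!0 - 1) \<in> W" using assms(2) unfolding W_def by auto
    then show "p!0 \<in> W" using False x by auto
  qed (simp add: W_def)
  show "nonid n p \<subseteq> W \<times> W"
  proof (rule subsetI)
    fix x assume xin: "x \<in> nonid n p"
    obtain a b where x: "x = (a,b)" by (cases x)
    have ab: "(a,b) \<in> nonid n p" using xin x by simp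
    then have abp: "(a,b) \<in> char_set p" and nid: "\<not> (1 \<le> a \<and> a < n \<and> b = Suc a)"
      unfolding nonid_def char_set_id by auto
    have ab1: "a \<in> {1..n}" "b \<in> {1..n}" using char_set_in[OF abp] d(3) by simp_all
    have aW: "a \<in> W"
    proof (cases "a = n")
      case True then show ?thesis unfolding W_def by simp
    next
      case False
      have "(a, Suc a) \<notin> char_set p"
      proof
        assume h: "(a, Suc a) \<in> char_set p"
        have "b = Suc a" using succ_unique[OF d(1) abp h] .
        then show False using nid ab1 False by auto
      qed
      then have "a \<in> cutset n p" using ab1 False unfolding cutset_def by auto
      then show ?thesis using assms(2) unfolding W_def by auto
    qed
    have bW: "b \<in> W"
    proof (cases "b = 1")
      case False
      have "(b - 1, b) \<notin> char_set p"
      proof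
        assume h: "(b - 1, b) \<in> char_set p"
        have "a = b - 1" using pred_unique[OF d(1) abp h] .
        then show False using nid ab1 False by auto
      qed
      then have "b - 1 \<in> cutset n p" using ab1 False unfolding cutset_def by auto
      then have "Suc (b - 1) \<in> W" using assms(2) unfolding W_def by auto
      then show ?thesis using False ab1 by auto
    qed (simp add: W_def)
    show "x \<in> W \<times> W" using aW bW x by simp
  qed
qed


lemma cutset_sub: "cutset n p \<subseteq> {1..<n}" unfolding cutset_def by auto

lemma finite_cutset[simp]: "finite (cutset n p)"
  using cutset_sub by (rule finite_subset) simp

lemma key:
  assumes d3: "d \<ge> 3" and p: "p \<in> perms n" and q: "q \<in> perms n"
    and dp: "dB p (id_perm n) < d" and dq: "dB q (id_perm n) < d" and pq: "dB p q < d"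
  shows "card (cutset n p \<union> cutset n q) \<le> 2*d - 3"
proof (rule ccontr)
  assume H: "\<not> ?thesis"
  define Sp where "Sp = cutset n p"
  define Sq where "Sq = cutset n q"
  have dpp: "distinct p" "length p = n" "set p = {1..n}" using p perms_distinct perms_len perms_set by auto
  have dqq: "distinct q" "length q = n" using q perms_distinct perms_len by auto
  have cp: "card Sp < d" using card_cutset[OF p] dp Sp_def by simp
  have cq: "card Sq < d" using card_cutset[OF q] dq Sq_def by simp
  have ui: "card Sp + card Sq = card (Sp \<union> Sq) + card (Sp \<inter> Sq)"
    by (rule card_Un_Int) (simp_all add: Sp_def Sq_def)
  have cu: "card (Sp \<union> Sq) > 2*d - 3" using H Sp_def Sq_def by simp
  have cpe: "card Sp = d - 1" and cqe: "card Sq = d - 1" and ci: "card (Sp \<inter> Sq) = 0"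
    using ui cu cp cq d3 by linarith+
  have disj: "Sp \<inter> Sq = {}" using ci by (simp add: Sp_def)
  have "\<not> Sp \<subseteq> {last p}"
  proof
    assume sl: "Sp \<subseteq> {last p}"
    have "card Sp \<le> card {last p}" by (rule card_mono) (simp_all add: sl)
    then show False using cpe d3 by simp
  qed
  then obtain a where aSp: "a \<in> Sp" and al: "a \<noteq> last p" by blast
  have a1: "a \<in> {1..<n}" using aSp cutset_sub Sp_def by blast
  have aSq: "a \<notin> Sq" using disj aSp by blast
  have "a \<in> set p" using a1 dpp by simp
  then obtain j where j: "j < n" "p!j = a" using dpp(2) by (metis in_set_conv_nth)
  have pne: "p \<noteq> []" using j dpp by auto
  have "last p = p!(n-1)" using pne dpp by (simp add: last_conv_nth)
  then have "j \<noteq> n - 1" using al j by auto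
  then have sj: "Suc j < n" using j by simp
  define b where "b = p!Suc j"
  have abp: "(a,b) \<in> char_set p" unfolding mem_char_set b_def using sj j dpp by auto
  have "(a, Suc a) \<notin> char_set p" using aSp unfolding Sp_def cutset_def by simp
  then have bne: "b \<noteq> Suc a" using abp by auto
  have "(a, Suc a) \<in> char_set q" using aSq a1 unfolding Sq_def cutset_def by simp
  then have abq: "(a,b) \<notin> char_set q" using succ_unique[OF dqq(1)] bne by blast
  have sub: "insert (a,b) ((\<lambda>i. (i, Suc i)) ` Sq) \<subseteq> char_set p - char_set q"
  proof
    fix x assume "x \<in> insert (a,b) ((\<lambda>i. (i, Suc i)) ` Sq)"
    then consider "x = (a,b)" | i where "i \<in> Sq" "x = (i, Suc i)" by blast
    then show "x \<in> char_set p - char_set q"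
    proof cases
      case 1 then show ?thesis using abp abq by simp
    next
      case 2
      have "i \<in> {1..<n}" using 2 cutset_sub Sq_def by blast
      moreover have "i \<notin> Sp" using 2 disj by blast
      ultimately have "(i, Suc i) \<in> char_set p" unfolding Sp_def cutset_def by simp
      moreover have "(i, Suc i) \<notin> char_set q" using 2 unfolding Sq_def cutset_def by simp
      ultimately show ?thesis using 2 by simp
    qed
  qed
  have "(a,b) \<notin> (\<lambda>i. (i, Suc i)) ` Sq" using bne by auto
  then have "card (insert (a,b) ((\<lambda>i. (i, Suc i)) ` Sq)) = Suc (card ((\<lambda>i. (i, Suc i)) ` Sq))"
    by (simp add: Sq_def)
  also have "card ((\<lambda>i. (i, Suc i)) ` Sq) = card Sq" by (rule card_image) (auto simp: inj_on_def)
  finally have "card (insert (a,b) ((\<lambda>i. (i, Suc i)) ` Sq)) = d" using cqe d3 by simp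
  moreover have "card (insert (a,b) ((\<lambda>i. (i, Suc i)) ` Sq)) \<le> card (char_set p - char_set q)"
    by (rule card_mono[OF _ sub]) simp
  ultimately show False using pq unfolding dB_def by simp
qed

definition Wl :: "nat \<Rightarrow> nat list \<Rightarrow> nat set" where
  "Wl n t = insert 1 (insert n (set t \<union> Suc ` set t))"

definition Dec :: "nat \<Rightarrow> nat list \<Rightarrow> (nat list \<times> nat list) set" where
  "Dec n t = {(p,q). p \<in> perms n \<and> q \<in> perms n \<and> cutset n p \<subseteq> set t \<and> cutset n q \<subseteq> set t}"

lemma finite_perms: "finite (perms n)"
proof (rule finite_subset)
  show "perms n \<subseteq> {xs. set xs \<subseteq> {1..n} \<and> length xs = n}"
    using perms_len perms_set by blast
qed (rule finite_lists_length_eq, simp)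

lemma card_Wl: "card (Wl n t) \<le> 2 * length t + 2"
proof -
  have "card (Wl n t) \<le> Suc (Suc (card (set t \<union> Suc ` set t)))"
  proof -
    have ci: "\<And>x (A::nat set). finite A \<Longrightarrow> card (insert x A) \<le> Suc (card A)" by (simp add: card_insert_if)
    have f: "finite (set t \<union> Suc ` set t)" by simp
    show ?thesis unfolding Wl_def using ci[OF f, of n] ci[of "insert n (set t \<union> Suc ` set t)" 1] f by simp
  qed
  moreover have "card (set t \<union> Suc ` set t) \<le> card (set t) + card (Suc ` set t)" by (rule card_Un_le)
  moreover have "card (Suc ` set t) \<le> card (set t)" by (rule card_image_le) simp
  moreover have "card (set t) \<le> length t" by (rule card_length)
  ultimately show ?thesis by linarith
qed

lemma card_Dec:
  assumes n1: "n \<ge> 1"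
  shows "card (Dec n t) \<le> ((2 * length t + 2) * 2 ^ (2 * length t + 2) * 2 ^ ((2 * length t + 2) * (2 * length t + 2))) ^ 2"
proof -
  define W where "W = Wl n t"
  define M where "M = 2 * length t + 2"
  define Q where "Q = W \<times> Pow W \<times> Pow (W \<times> W)"
  define f where "f = (\<lambda>(p::nat list, q::nat list). ((p!0, cutset n p, nonid n p), (q!0, cutset n q, nonid n q)))"
  have fW: "finite W" unfolding W_def Wl_def by simp
  have inj: "inj_on f (Dec n t)"
  proof (rule inj_onI, clarify)
    fix p q p' q' assume a: "(p,q) \<in> Dec n t" "(p',q') \<in> Dec n t" "f (p,q) = f (p',q')"
    have pp: "p \<in> perms n" "q \<in> perms n" "p' \<in> perms n" "q' \<in> perms n" using a unfolding Dec_def by auto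
    have e: "p!0 = p'!0" "cutset n p = cutset n p'" "nonid n p = nonid n p'"
            "q!0 = q'!0" "cutset n q = cutset n q'" "nonid n q = nonid n q'"
      using a(3) unfolding f_def by auto
    have "char_set p = char_set p'" using char_set_decomp[OF pp(1)] char_set_decomp[OF pp(3)] e by simp
    then have "p = p'" using uniq[OF pp(1) pp(3) e(1)] by simp
    moreover have "char_set q = char_set q'" using char_set_decomp[OF pp(2)] char_set_decomp[OF pp(4)] e by simp
    then have "q = q'" using uniq[OF pp(2) pp(4) e(4)] by simp
    ultimately show "p = p' \<and> q = q'" by simp
  qed
  have img: "f ` Dec n t \<subseteq> Q \<times> Q"
  proof (rule subsetI)
    fix y assume "y \<in> f ` Dec n t"
    then obtain p q where a: "(p,q) \<in> Dec n t" and y: "y = f (p,q)" by auto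
    have pp: "p \<in> perms n" "q \<in> perms n" "cutset n p \<subseteq> set t" "cutset n q \<subseteq> set t"
      using a unfolding Dec_def by auto
    show "y \<in> Q \<times> Q" unfolding y
      using W_contain[OF pp(1) pp(3) n1] W_contain[OF pp(2) pp(4) n1] pp(3,4)
      unfolding f_def Q_def W_def Wl_def by auto
  qed
  have fQ: "finite Q" unfolding Q_def using fW by simp
  have "card (Dec n t) = card (f ` Dec n t)" using inj by (simp add: card_image)
  also have "\<dots> \<le> card (Q \<times> Q)" by (rule card_mono) (use fQ img in auto)
  also have "\<dots> = card Q ^ 2" by (simp add: card_cartesian_product power2_eq_square)
  also have "card Q = card W * 2 ^ card W * 2 ^ (card W * card W)"
    unfolding Q_def using fW by (simp add: card_cartesian_product card_Pow)
  also have "\<dots> \<le> M * 2 ^ M * 2 ^ (M * M)"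
  proof -
    have cW: "card W \<le> M" using card_Wl W_def M_def by simp
    show ?thesis
      by (intro mult_le_mono power_increasing cW) simp_all
  qed
  finally show ?thesis
    by (smt (verit) M_def le_trans power_mono zero_le)
qed


theorem mainTheorem2:
  fixes d :: nat
  assumes "d \<ge> 3"
  shows "\<exists>C::real. C > 0 \<and> (\<exists>N. \<forall>n\<ge>N. real (P n d) \<le> C * real n ^ (2 * d - 3))"
proof -
  define L where "L = 2 * d - 3"
  define M where "M = 2 * L + 2"
  define K :: nat where "K = (M * 2 ^ M * 2 ^ (M * M)) ^ 2"
  have bound: "P n d \<le> (Suc n) ^ L * K" if n1: "n \<ge> 1" for n
  proof -
    define V where "V = H_vertices n d"
    define Pairs where "Pairs = {(p,q). p \<in> V \<and> q \<in> V \<and> dB p q < d}"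
    define Lists where "Lists = {t. set t \<subseteq> {..n} \<and> length t = L}"
    have Vp: "V \<subseteq> perms n" unfolding V_def H_vertices_def by auto
    have PP: "Pairs \<subseteq> perms n \<times> perms n" using Vp unfolding Pairs_def by auto
    have fP: "finite Pairs" using PP finite_perms by (meson finite_SigmaI finite_subset)
    have "H_edges n d \<subseteq> (\<lambda>(p,q). {p,q}) ` Pairs"
      unfolding H_edges_def Pairs_def V_def by auto
    then have "P n d \<le> card ((\<lambda>(p,q). {p,q}) ` Pairs)"
      unfolding P_def using fP by (intro card_mono) auto
    also have "\<dots> \<le> card Pairs" using fP by (rule card_image_le)
    also have "Pairs \<subseteq> (\<Union>t\<in>Lists. Dec n t)"
    proof
      fix x assume "x \<in> Pairs"
      then obtain p q where x: "x = (p,q)" and pq: "p \<in> V" "q \<in> V" "dB p q < d"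
        unfolding Pairs_def by auto
      have pp: "p \<in> perms n" "q \<in> perms n" "dB p (id_perm n) < d" "dB q (id_perm n) < d"
        using pq unfolding V_def H_vertices_def by auto
      define S where "S = cutset n p \<union> cutset n q"
      have cS: "card S \<le> L" unfolding S_def L_def by (rule key[OF assms pp pq(3)])
      have fS: "finite S" unfolding S_def by simp
      define t where "t = sorted_list_of_set S @ replicate (L - card S) 0"
      have lt: "length t = L" unfolding t_def using cS by simp
      have st: "set t \<subseteq> insert 0 S" unfolding t_def using fS by auto
      have st2: "S \<subseteq> set t" unfolding t_def using fS by auto
      have "S \<subseteq> {..n}" unfolding S_def using cutset_sub[of n p] cutset_sub[of n q] by auto
      then have "t \<in> Lists" unfolding Lists_def using lt st by auto
      moreover have "x \<in> Dec n t" unfolding Dec_def x using pp st2 S_def by auto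
      ultimately show "x \<in> (\<Union>t\<in>Lists. Dec n t)" by blast
    qed
    then have "card Pairs \<le> card (\<Union>t\<in>Lists. Dec n t)"
    proof (rule card_mono[rotated])
      have "(\<Union>t\<in>Lists. Dec n t) \<subseteq> perms n \<times> perms n" unfolding Dec_def by auto
      then show "finite (\<Union>t\<in>Lists. Dec n t)" using finite_perms by (meson finite_SigmaI finite_subset)
    qed
    also have fL: "finite Lists" unfolding Lists_def by (rule finite_lists_length_eq) simp
    then have "card (\<Union>t\<in>Lists. Dec n t) \<le> (\<Sum>t\<in>Lists. card (Dec n t))" by (rule card_UN_le)
    also have "\<dots> \<le> (\<Sum>t\<in>Lists. K)"
    proof (rule sum_mono)
      fix t assume "t \<in> Lists"
      then have "length t = L" unfolding Lists_def by simp
      then show "card (Dec n t) \<le> K" using card_Dec[OF n1, of t] unfolding K_def M_def by simp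
    qed
    also have "\<dots> = card Lists * K" by simp
    also have "card Lists = Suc n ^ L" unfolding Lists_def by (simp add: card_lists_length_eq)
    finally show ?thesis .
  qed
  have Kp: "K > 0" unfolding K_def M_def by simp
  show ?thesis
  proof (intro exI conjI allI impI)
    show "real (2 ^ L * K) > 0" using Kp by simp
    fix n :: nat assume n1: "1 \<le> n"
    have "Suc n ^ L \<le> (2 * n) ^ L" using n1 by (intro power_mono) simp_all
    then have "Suc n ^ L * K \<le> 2 ^ L * K * n ^ L" by (simp add: power_mult_distrib)
    then have "P n d \<le> 2 ^ L * K * n ^ L" using bound[OF n1] by linarith
    then have "real (P n d) \<le> real (2 ^ L * K * n ^ L)" by (simp only: of_nat_le_iff)
    then show "real (P n d) \<le> real (2 ^ L * K) * real n ^ (2 * d - 3)"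
      unfolding L_def by simp
  qed
qed

end
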